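(* Let $\rho^\star\in\mathbb{R}^{n\times n}$ be an optimal solution of the SDP $\max_{\rho} \operatorname{tr}(C\rho)$ subject to $\rho \succeq 0$, $\rho_{ii} = 1/n$ for all $i\in[n]$, where $C\in\mathbb{R}^{n\times n}$ is a symmetric cost matrix with the block structure $C = \begin{pmatrix} 0 & B \\ B^T & 0 \end{pmatrix}$ for some $B\in\mathbb{R}^{n/2\times n/2}$. Let $\rho\in\mathbb{R}^{n\times n}$ be a positive semidefinite matrix with $\rho_{ii}>0$ for all $i$, and let $x\in \{-1,1\}^n$ be the vector obtained by applying the randomized rounding procedure to $\rho$, i.e. compute the symmetric matrix square root $\sqrt{\rho}$, sample $g_j \overset{\mathrm{iid}}{\sim} \mathcal{N}(0,1)$ for $j\in[n]$, and set $x_i = \operatorname{sgn}\big(\sum_j (\sqrt{\rho})_{ij} g_j\big)$ for $i\in[n]$. Let $\sigma\in\mathbb{R}^{n\times n}$ be the matrix with entries $\sigma_{ij}=\frac{\rho_{ij}}{n\sqrt{\rho_{ii}\rho_{jj}}}$. Then \[ \mathbb{E} \left[ x^T C x \right] \geq \frac2{\pi} n \operatorname{tr} (C\sigma) -\left(1 - \frac2{\pi} \right) n \operatorname{tr} (C \rho^\star). \]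
   Context: The expectation is over the Gaussian vector $g$ in the rounding procedure. *)

theory Defs
  imports "HOL-Probability.Probability"
begin

text \<open>Real n-by-n matrices are represented as functions nat => nat => real;
  only the entries with indices below n are relevant.\<close>

definition mat_psd :: "nat \<Rightarrow> (nat \<Rightarrow> nat \<Rightarrow> real) \<Rightarrow> bool" where
  "mat_psd n A \<longleftrightarrow> (\<forall>i<n. \<forall>j<n. A i j = A j i) \<and>
     (\<forall>v :: nat \<Rightarrow> real. 0 \<le> (\<Sum>i<n. \<Sum>j<n. v i * A i j * v j))"

definition mat_mult :: "nat \<Rightarrow> (nat \<Rightarrow> nat \<Rightarrow> real) \<Rightarrow> (nat \<Rightarrow> nat \<Rightarrow> real) \<Rightarrow> (nat \<Rightarrow> nat \<Rightarrow> real)" where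
  "mat_mult n A B = (\<lambda>i j. \<Sum>k<n. A i k * B k j)"

definition mat_trace_prod :: "nat \<Rightarrow> (nat \<Rightarrow> nat \<Rightarrow> real) \<Rightarrow> (nat \<Rightarrow> nat \<Rightarrow> real) \<Rightarrow> real" where
  "mat_trace_prod n A B = (\<Sum>i<n. \<Sum>j<n. A i j * B j i)"

text \<open>The symmetric positive semidefinite square root (entries outside the
  index range are normalised to 0 so that it is unique).\<close>
definition mat_sqrt :: "nat \<Rightarrow> (nat \<Rightarrow> nat \<Rightarrow> real) \<Rightarrow> (nat \<Rightarrow> nat \<Rightarrow> real)" where
  "mat_sqrt n A = (THE S. mat_psd n S \<and> (\<forall>i<n. \<forall>j<n. mat_mult n S S i j = A i j)
      \<and> (\<forall>i j. \<not> (i < n \<and> j < n) \<longrightarrow> S i j = 0))"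

definition sdp_feasible :: "nat \<Rightarrow> (nat \<Rightarrow> nat \<Rightarrow> real) \<Rightarrow> bool" where
  "sdp_feasible n R \<longleftrightarrow> mat_psd n R \<and> (\<forall>i<n. R i i = 1 / real n)"

definition sdp_optimal :: "nat \<Rightarrow> (nat \<Rightarrow> nat \<Rightarrow> real) \<Rightarrow> (nat \<Rightarrow> nat \<Rightarrow> real) \<Rightarrow> bool" where
  "sdp_optimal n C R \<longleftrightarrow> sdp_feasible n R \<and>
     (\<forall>R'. sdp_feasible n R' \<longrightarrow> mat_trace_prod n C R' \<le> mat_trace_prod n C R)"

definition rounding :: "nat \<Rightarrow> (nat \<Rightarrow> nat \<Rightarrow> real) \<Rightarrow> (nat \<Rightarrow> real) \<Rightarrow> nat \<Rightarrow> real" where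
  "rounding n R g i = sgn (\<Sum>j<n. mat_sqrt n R i j * g j)"

definition gauss_vec :: "nat \<Rightarrow> (nat \<Rightarrow> real) measure" where
  "gauss_vec n = PiM {..<n} (\<lambda>_. std_normal_distribution)"

end

theory Submission
  imports Defs
begin


lemma gauss_prob: "prob_space (gauss_vec n)"
  unfolding gauss_vec_def
  by (intro prob_space_PiM) (simp add: prob_space_normal_density)

lemma sets_gauss: "sets (gauss_vec n) = sets (PiM {..<n} (\<lambda>_. borel))"
  unfolding gauss_vec_def by (intro sets_PiM_cong) auto

lemma coord_meas[measurable]: "k < n \<Longrightarrow> (\<lambda>g. g k) \<in> borel_measurable (gauss_vec n)"
  using measurable_component_singleton[of k "{..<n}" "\<lambda>_. borel"]
  by (simp add: measurable_cong_sets[OF sets_gauss refl])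

lemma coord_distr:
  assumes k: "k < n"
  shows "distributed (gauss_vec n) lborel (\<lambda>g. g k) std_normal_density"
proof -
  have "distr (gauss_vec n) lborel (\<lambda>g. g k) = distr (gauss_vec n) std_normal_distribution (\<lambda>g. g k)"
    by (rule distr_cong) auto
  also have "\<dots> = std_normal_distribution"
    unfolding gauss_vec_def
    by (rule distr_PiM_component) (auto simp: k prob_space_normal_density)
  finally have eq: "distr (gauss_vec n) lborel (\<lambda>g. g k) = density lborel (\<lambda>x. ennreal (std_normal_density x))" .
  show ?thesis
    unfolding distributed_def
  proof (intro conjI)
    show "distr (gauss_vec n) lborel (\<lambda>g. g k) = density lborel (\<lambda>x. ennreal (std_normal_density x))" by (rule eq)
    show "(\<lambda>x. ennreal (std_normal_density x)) \<in> borel_measurable lborel" by simp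
    show "(\<lambda>g. g k) \<in> measurable (gauss_vec n) lborel" using coord_meas[OF k] by simp
  qed
qed

lemma coord_indep:
  assumes n: "0 < n"
  shows "prob_space.indep_vars (gauss_vec n) (\<lambda>_. borel) (\<lambda>k g. g k) {..<n}"
proof -
  interpret prob_space "gauss_vec n" by (rule gauss_prob)
  have rv: "\<And>i. i \<in> {..<n} \<Longrightarrow> random_variable borel (\<lambda>g. g i)" by auto
  have d: "distr (gauss_vec n) borel (\<lambda>g. g i) = std_normal_distribution" if "i < n" for i
  proof -
    have "distr (gauss_vec n) borel (\<lambda>g. g i) = distr (gauss_vec n) std_normal_distribution (\<lambda>g. g i)"
      by (rule distr_cong) auto
    also have "\<dots> = std_normal_distribution"
      unfolding gauss_vec_def
      by (rule distr_PiM_component) (auto simp: that prob_space_normal_density)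
    finally show ?thesis .
  qed
  have "distr (gauss_vec n) (PiM {..<n} (\<lambda>_. borel)) (\<lambda>x. \<lambda>i\<in>{..<n}. x i)
      = distr (gauss_vec n) (PiM {..<n} (\<lambda>_. borel)) (\<lambda>x. x)"
    by (rule distr_cong) (auto simp: gauss_vec_def space_PiM PiE_def extensional_def fun_eq_iff)
  also have "\<dots> = gauss_vec n" by (rule distr_id2) (simp add: sets_gauss)
  also have "\<dots> = PiM {..<n} (\<lambda>i. distr (gauss_vec n) borel (\<lambda>g. g i))"
    unfolding gauss_vec_def by (rule PiM_cong) (auto simp: d[unfolded gauss_vec_def])
  finally have eq: "distr (gauss_vec n) (PiM {..<n} (\<lambda>_. borel)) (\<lambda>x. \<lambda>i\<in>{..<n}. x i)
      = PiM {..<n} (\<lambda>i. distr (gauss_vec n) borel (\<lambda>g. g i))" .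
  have ne: "{..<n} \<noteq> {}" using n by auto
  show ?thesis
    using indep_vars_iff_distr_eq_PiM'[where I="{..<n}" and M'="\<lambda>_. borel" and X="\<lambda>k g. g k", OF ne rv] eq by simp
qed

lemma lin_normal:
  fixes a :: "nat \<Rightarrow> real"
  assumes S: "0 < (\<Sum>j<n. (a j)\<^sup>2)"
  shows "distributed (gauss_vec n) lborel (\<lambda>g. \<Sum>j<n. a j * g j)
           (normal_density 0 (sqrt (\<Sum>j<n. (a j)\<^sup>2)))"
proof -
  interpret prob_space "gauss_vec n" by (rule gauss_prob)
  define I where "I = {j\<in>{..<n}. a j \<noteq> 0}"
  have fin: "finite I" unfolding I_def by auto
  have ne: "I \<noteq> {}"
  proof
    assume "I = {}"
    then have "\<And>j. j < n \<Longrightarrow> a j = 0" unfolding I_def by auto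
    then show False using S by simp
  qed
  then have n: "0 < n" unfolding I_def by auto
  have ind: "indep_vars (\<lambda>_. borel) (\<lambda>j g. a j * g j) I"
  proof -
    have ind0: "indep_vars (\<lambda>_. borel) (\<lambda>k g. g k) I"
      by (rule indep_vars_subset[OF coord_indep[OF n]]) (auto simp: I_def)
    show ?thesis
      using indep_vars_compose2[OF ind0, where Y="\<lambda>j x. a j * x" and N="\<lambda>_. borel"] by auto
  qed
  have dj: "distributed (gauss_vec n) lborel (\<lambda>g. a j * g j) (normal_density 0 \<bar>a j\<bar>)"
    if "j \<in> I" for j
    using normal_density_affine[OF coord_distr[of j n], where \<alpha>="a j" and \<beta>=0] that unfolding I_def by auto
  have D: "distributed (gauss_vec n) lborel (\<lambda>g. \<Sum>j\<in>I. a j * g j)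
      (normal_density (\<Sum>j\<in>I. 0) (sqrt (\<Sum>j\<in>I. \<bar>a j\<bar>\<^sup>2)))"
    by (rule sum_indep_normal[OF fin ne ind]) (use dj in \<open>auto simp: I_def\<close>)
  moreover have E1: "(\<Sum>j\<in>I. \<bar>a j\<bar>\<^sup>2) = (\<Sum>j<n. (a j)\<^sup>2)"
    unfolding I_def power2_abs by (rule sum.mono_neutral_left) auto
  moreover have E2: "(\<lambda>g. \<Sum>j\<in>I. a j * g j) = (\<lambda>g. \<Sum>j<n. a j * g j)"
    unfolding I_def by (intro ext sum.mono_neutral_left) auto
  moreover have E0: "(\<Sum>j\<in>I. (0::real)) = 0" by simp
  ultimately show ?thesis unfolding E0 E1 E2 by blast
qed

lemma lin_zero:
  fixes a :: "nat \<Rightarrow> real"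
  assumes "\<not> 0 < (\<Sum>j<n. (a j)\<^sup>2)"
  shows "(\<lambda>g. \<Sum>j<n. a j * g j) = (\<lambda>g. 0)"
proof -
  have "(\<Sum>j<n. (a j)\<^sup>2) = 0" using assms by (metis less_eq_real_def sum_nonneg zero_le_power2)
  then have "\<forall>j\<in>{..<n}. (a j)\<^sup>2 = 0" by (subst sum_nonneg_eq_0_iff[symmetric]) auto
  then show ?thesis by auto
qed

lemma lin_meas[measurable]: "(\<lambda>g. \<Sum>j<n. a j * g j) \<in> borel_measurable (gauss_vec n)"
  by (intro borel_measurable_sum borel_measurable_times) auto

lemma lin_sq:
  fixes a :: "nat \<Rightarrow> real"
  shows "integrable (gauss_vec n) (\<lambda>g. (\<Sum>j<n. a j * g j)\<^sup>2)"
    "(\<integral>g. (\<Sum>j<n. a j * g j)\<^sup>2 \<partial>gauss_vec n) = (\<Sum>j<n. (a j)\<^sup>2)"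
proof -
  interpret prob_space "gauss_vec n" by (rule gauss_prob)
  have "integrable (gauss_vec n) (\<lambda>g. (\<Sum>j<n. a j * g j)\<^sup>2) \<and>
    (\<integral>g. (\<Sum>j<n. a j * g j)\<^sup>2 \<partial>gauss_vec n) = (\<Sum>j<n. (a j)\<^sup>2)"
  proof (cases "0 < (\<Sum>j<n. (a j)\<^sup>2)")
    case True
    define \<sigma> where "\<sigma> = sqrt (\<Sum>j<n. (a j)\<^sup>2)"
    have s: "0 < \<sigma>" using True unfolding \<sigma>_def by simp
    have D: "distributed (gauss_vec n) lborel (\<lambda>g. \<Sum>j<n. a j * g j) (normal_density 0 \<sigma>)"
      unfolding \<sigma>_def by (rule lin_normal[OF True])
    have "integrable lborel (\<lambda>x. normal_density 0 \<sigma> x * x\<^sup>2)"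
      using integrable_normal_moment[where \<mu>=0 and \<sigma>=\<sigma> and k=2] using s by simp
    then have i: "integrable (gauss_vec n) (\<lambda>g. (\<Sum>j<n. a j * g j)\<^sup>2)"
      using distributed_integrable[OF D, of "\<lambda>x. x\<^sup>2"] by simp
    have "(\<integral>g. (\<Sum>j<n. a j * g j)\<^sup>2 \<partial>gauss_vec n) = (\<integral>x. normal_density 0 \<sigma> x * x\<^sup>2 \<partial>lborel)"
      using distributed_integral[OF D, of "\<lambda>x. x\<^sup>2"] by simp
    also have "\<dots> = \<sigma>\<^sup>2"
      using integral_normal_moment_even[where \<mu>=0 and \<sigma>=\<sigma> and k=1] s by (simp add: power2_eq_square)
    also have "\<dots> = (\<Sum>j<n. (a j)\<^sup>2)" unfolding \<sigma>_def using True by simp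
    finally show ?thesis using i by simp
  next
    case False
    have S0: "(\<Sum>j<n. (a j)\<^sup>2) = 0" using False by (metis less_eq_real_def sum_nonneg zero_le_power2)
    have z: "\<And>g. (\<Sum>j<n. a j * g j) = 0" using lin_zero[OF False] by meson
    show ?thesis unfolding z S0 by simp
  qed
  then show "integrable (gauss_vec n) (\<lambda>g. (\<Sum>j<n. a j * g j)\<^sup>2)"
    "(\<integral>g. (\<Sum>j<n. a j * g j)\<^sup>2 \<partial>gauss_vec n) = (\<Sum>j<n. (a j)\<^sup>2)" by auto
qed

lemma lin_abs:
  fixes a :: "nat \<Rightarrow> real"
  shows "integrable (gauss_vec n) (\<lambda>g. \<bar>\<Sum>j<n. a j * g j\<bar>)"
    "(\<integral>g. \<bar>\<Sum>j<n. a j * g j\<bar> \<partial>gauss_vec n) = sqrt (2 / pi) * sqrt (\<Sum>j<n. (a j)\<^sup>2)"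
proof -
  interpret prob_space "gauss_vec n" by (rule gauss_prob)
  have "integrable (gauss_vec n) (\<lambda>g. \<bar>\<Sum>j<n. a j * g j\<bar>) \<and>
    (\<integral>g. \<bar>\<Sum>j<n. a j * g j\<bar> \<partial>gauss_vec n) = sqrt (2 / pi) * sqrt (\<Sum>j<n. (a j)\<^sup>2)"
  proof (cases "0 < (\<Sum>j<n. (a j)\<^sup>2)")
    case True
    define \<sigma> where "\<sigma> = sqrt (\<Sum>j<n. (a j)\<^sup>2)"
    have s: "0 < \<sigma>" using True unfolding \<sigma>_def by simp
    have D: "distributed (gauss_vec n) lborel (\<lambda>g. \<Sum>j<n. a j * g j) (normal_density 0 \<sigma>)"
      unfolding \<sigma>_def by (rule lin_normal[OF True])
    have "integrable lborel (\<lambda>x. normal_density 0 \<sigma> x * \<bar>x\<bar>)"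
      using integrable_normal_moment_abs[where \<mu>=0 and \<sigma>=\<sigma> and k=1] using s by simp
    then have i: "integrable (gauss_vec n) (\<lambda>g. \<bar>\<Sum>j<n. a j * g j\<bar>)"
      using distributed_integrable[OF D, of "\<lambda>x. \<bar>x\<bar>"] by simp
    have "(\<integral>g. \<bar>\<Sum>j<n. a j * g j\<bar> \<partial>gauss_vec n) = (\<integral>x. normal_density 0 \<sigma> x * \<bar>x\<bar> \<partial>lborel)"
      using distributed_integral[OF D, of "\<lambda>x. \<bar>x\<bar>"] by simp
    also have "\<dots> = \<sigma> * sqrt (2 / pi)"
      using integral_normal_moment_abs_odd[where \<mu>=0 and \<sigma>=\<sigma> and k=0] s by simp
    finally show ?thesis using i unfolding \<sigma>_def by (simp add: mult.commute)
  next
    case False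
    have S0: "(\<Sum>j<n. (a j)\<^sup>2) = 0" using False by (metis less_eq_real_def sum_nonneg zero_le_power2)
    have z: "\<And>g. (\<Sum>j<n. a j * g j) = 0" using lin_zero[OF False] by meson
    show ?thesis unfolding z S0 by simp
  qed
  then show "integrable (gauss_vec n) (\<lambda>g. \<bar>\<Sum>j<n. a j * g j\<bar>)"
    "(\<integral>g. \<bar>\<Sum>j<n. a j * g j\<bar> \<partial>gauss_vec n) = sqrt (2 / pi) * sqrt (\<Sum>j<n. (a j)\<^sup>2)" by auto
qed

lemma subgrad_abs: "\<bar>x + t * y\<bar> \<ge> \<bar>x\<bar> + t * (sgn x * y)" for x y t :: real
proof -
  have "sgn x * (x + t * y) = \<bar>x\<bar> + t * (sgn x * y)" by (simp add: algebra_simps abs_sgn)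
  moreover have "sgn x * (x + t * y) \<le> \<bar>x + t * y\<bar>"
    by (cases "x > 0"; cases "x < 0") auto
  ultimately show ?thesis by simp
qed

lemma supp_line_deriv:
  fixes \<phi> :: "real \<Rightarrow> real"
  assumes D: "(\<phi> has_real_derivative d) (at 0)"
    and le: "\<And>t. \<phi> 0 + t * m \<le> \<phi> t"
  shows "m = d"
proof -
  have q: "((\<lambda>t. (\<phi> t - \<phi> 0) / t) \<longlongrightarrow> d) (at 0)"
    using D unfolding has_field_derivative_iff by simp
  have "m \<le> d"
  proof (rule tendsto_lowerbound[OF filterlim_mono[OF q order.refl at_le]])
    show "\<forall>\<^sub>F t in at_right 0. m \<le> (\<phi> t - \<phi> 0) / t"
      using eventually_at_right_less[of "0::real"]
      by (rule eventually_mono) (use le in \<open>auto simp: pos_le_divide_eq algebra_simps\<close>)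
  qed auto
  moreover have "d \<le> m"
  proof (rule tendsto_upperbound[OF filterlim_mono[OF q order.refl at_le]])
    show "\<forall>\<^sub>F t in at_left 0. (\<phi> t - \<phi> 0) / t \<le> m"
      using eventually_at_left_real[of "-1::real" 0, OF neg_less_0_iff_less[THEN iffD2, OF zero_less_one]]
      by (rule eventually_mono) (use le in \<open>auto simp: neg_divide_le_eq algebra_simps\<close>)
  qed auto
  ultimately show ?thesis by simp
qed

lemma coord_integrable:
  assumes k: "k < n"
  shows "integrable (gauss_vec n) (\<lambda>g. g k)"
proof -
  have e: "(\<Sum>j<n. (if j = k then 1 else 0) * g j) = (g k :: real)" for g
  proof -
    have "(\<Sum>j<n. (if j = k then 1 else 0) * g j) = (\<Sum>j<n. if j = k then g j else (0::real))"
      by (intro sum.cong) auto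
    then show ?thesis using k by simp
  qed
  have "integrable (gauss_vec n) (\<lambda>g. \<bar>g k\<bar>)"
    using lin_abs(1)[of n "\<lambda>j. if j = k then 1 else 0"] unfolding e .
  then show ?thesis using integrable_abs_iff[of "\<lambda>g. g k" "gauss_vec n"] k by simp
qed

lemma sgn_coord:
  fixes a :: "nat \<Rightarrow> real"
  assumes S: "0 < (\<Sum>j<n. (a j)\<^sup>2)" and k: "k < n"
  shows "integrable (gauss_vec n) (\<lambda>g. sgn (\<Sum>j<n. a j * g j) * g k)"
    "(\<integral>g. sgn (\<Sum>j<n. a j * g j) * g k \<partial>gauss_vec n)
       = sqrt (2 / pi) * a k / sqrt (\<Sum>j<n. (a j)\<^sup>2)"
proof -
  interpret prob_space "gauss_vec n" by (rule gauss_prob)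
  define Sa where "Sa = (\<Sum>j<n. (a j)\<^sup>2)"
  define c where "c = sqrt (2 / pi)"
  define m where "m = (\<integral>g. sgn (\<Sum>j<n. a j * g j) * g k \<partial>gauss_vec n)"
  show int: "integrable (gauss_vec n) (\<lambda>g. sgn (\<Sum>j<n. a j * g j) * g k)"
    by (rule Bochner_Integration.integrable_bound[OF coord_integrable[OF k]])
       (use k in \<open>auto simp: abs_mult abs_sgn_eq intro!: mult_left_le_one_le\<close>)
  define \<phi> where "\<phi> t = c * sqrt (Sa + 2 * t * a k + t\<^sup>2)" for t
  have lin_t: "(\<Sum>j<n. (a j + (if j = k then t else 0)) * g j) = (\<Sum>j<n. a j * g j) + t * g k" for t g
  proof -
    have "(\<Sum>j<n. (a j + (if j = k then t else 0)) * g j) = (\<Sum>j<n. a j * g j + (if j = k then t * g j else 0))"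
      by (intro sum.cong) (auto simp: algebra_simps)
    then show ?thesis using k by (simp add: sum.distrib)
  qed
  have sq_t: "(\<Sum>j<n. (a j + (if j = k then t else 0))\<^sup>2) = Sa + 2 * t * a k + t\<^sup>2" for t
  proof -
    have "(\<Sum>j<n. (a j + (if j = k then t else 0))\<^sup>2)
        = (\<Sum>j<n. (a j)\<^sup>2 + (if j = k then 2 * t * a k + t\<^sup>2 else 0))"
      by (intro sum.cong) (auto simp: power2_eq_square algebra_simps)
    also have "\<dots> = Sa + 2 * t * a k + t\<^sup>2"
      using k by (simp add: sum.distrib Sa_def)
    finally show ?thesis .
  qed
  have phi: "\<phi> t = (\<integral>g. \<bar>(\<Sum>j<n. a j * g j) + t * g k\<bar> \<partial>gauss_vec n)" for t
    using lin_abs(2)[of n "\<lambda>j. a j + (if j = k then t else 0)"] unfolding lin_t sq_t \<phi>_def c_def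
    by simp
  have le: "\<phi> 0 + t * m \<le> \<phi> t" for t
  proof -
    have i1: "integrable (gauss_vec n) (\<lambda>g. \<bar>(\<Sum>j<n. a j * g j) + t * g k\<bar>)"
      using lin_abs(1)[of n "\<lambda>j. a j + (if j = k then t else 0)"] unfolding lin_t .
    have i0: "integrable (gauss_vec n) (\<lambda>g. \<bar>\<Sum>j<n. a j * g j\<bar>)" by (rule lin_abs(1))
    have "\<phi> 0 + t * m = (\<integral>g. \<bar>\<Sum>j<n. a j * g j\<bar> + t * (sgn (\<Sum>j<n. a j * g j) * g k) \<partial>gauss_vec n)"
      unfolding phi m_def using i0 int by simp
    also have "\<dots> \<le> \<phi> t" unfolding phi
      by (intro integral_mono i1 Bochner_Integration.integrable_add i0 integrable_mult_right int subgrad_abs)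
    finally show ?thesis .
  qed
  have Spos: "0 < Sa" using S unfolding Sa_def .
  have D: "(\<phi> has_real_derivative c * (2 * a k) / (2 * sqrt Sa)) (at 0)"
    unfolding \<phi>_def
  proof -
    have d1: "((\<lambda>t. Sa + 2 * t * a k + t\<^sup>2) has_real_derivative 2 * a k) (at 0)"
      by (auto intro!: derivative_eq_intros)
    have d2: "(sqrt has_real_derivative inverse (sqrt Sa) / 2) (at (Sa + 2 * 0 * a k + 0\<^sup>2))"
      using DERIV_real_sqrt[OF Spos] by simp
    have "((\<lambda>t. sqrt (Sa + 2 * t * a k + t\<^sup>2)) has_real_derivative (inverse (sqrt Sa) / 2) * (2 * a k)) (at 0)"
      using DERIV_chain2[OF d2 d1] .
    then have "((\<lambda>t. c * sqrt (Sa + 2 * t * a k + t\<^sup>2)) has_real_derivative c * ((inverse (sqrt Sa) / 2) * (2 * a k))) (at 0)"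
      by (rule DERIV_cmult)
    then show "((\<lambda>t. c * sqrt (Sa + 2 * t * a k + t\<^sup>2)) has_real_derivative c * (2 * a k) / (2 * sqrt Sa)) (at 0)"
      by (simp add: field_simps)
  qed
  have "m = c * (2 * a k) / (2 * sqrt Sa)" by (rule supp_line_deriv[OF D le])
  then show "(\<integral>g. sgn (\<Sum>j<n. a j * g j) * g k \<partial>gauss_vec n)
       = sqrt (2 / pi) * a k / sqrt (\<Sum>j<n. (a j)\<^sup>2)"
    unfolding m_def c_def Sa_def by simp
qed

lemma lin_prod:
  fixes a b :: "nat \<Rightarrow> real"
  shows "integrable (gauss_vec n) (\<lambda>g. (\<Sum>j<n. a j * g j) * (\<Sum>j<n. b j * g j))"
    "(\<integral>g. (\<Sum>j<n. a j * g j) * (\<Sum>j<n. b j * g j) \<partial>gauss_vec n) = (\<Sum>j<n. a j * b j)"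
proof -
  have e: "(\<Sum>j<n. a j * g j) * (\<Sum>j<n. b j * g j) =
     ((\<Sum>j<n. (a j + b j) * g j)\<^sup>2 - (\<Sum>j<n. a j * g j)\<^sup>2 - (\<Sum>j<n. b j * g j)\<^sup>2) / 2" for g
    by (simp add: distrib_right sum.distrib power2_eq_square algebra_simps)
  have e2: "(\<Sum>j<n. a j * b j) = ((\<Sum>j<n. (a j + b j)\<^sup>2) - (\<Sum>j<n. (a j)\<^sup>2) - (\<Sum>j<n. (b j)\<^sup>2)) / 2"
    by (simp add: power2_eq_square sum.distrib algebra_simps sum_subtractf[symmetric] sum_distrib_left)
  show "integrable (gauss_vec n) (\<lambda>g. (\<Sum>j<n. a j * g j) * (\<Sum>j<n. b j * g j))"
    unfolding e by (intro integrable_divide Bochner_Integration.integrable_diff lin_sq)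
  show "(\<integral>g. (\<Sum>j<n. a j * g j) * (\<Sum>j<n. b j * g j) \<partial>gauss_vec n) = (\<Sum>j<n. a j * b j)"
    unfolding e e2
    by (simp add: Bochner_Integration.integral_diff Bochner_Integration.integrable_diff lin_sq)
qed

lemma sgn_lin:
  fixes a b :: "nat \<Rightarrow> real"
  assumes S: "0 < (\<Sum>j<n. (a j)\<^sup>2)"
  shows "integrable (gauss_vec n) (\<lambda>g. sgn (\<Sum>j<n. a j * g j) * (\<Sum>j<n. b j * g j))"
    "(\<integral>g. sgn (\<Sum>j<n. a j * g j) * (\<Sum>j<n. b j * g j) \<partial>gauss_vec n)
       = sqrt (2 / pi) * (\<Sum>j<n. a j * b j) / sqrt (\<Sum>j<n. (a j)\<^sup>2)"
proof -
  have e: "sgn (\<Sum>j<n. a j * g j) * (\<Sum>j<n. b j * g j) = (\<Sum>k<n. b k * (sgn (\<Sum>j<n. a j * g j) * g k))" for g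
    by (simp add: sum_distrib_left sum_distrib_right algebra_simps)
  have i: "\<And>k. k \<in> {..<n} \<Longrightarrow> integrable (gauss_vec n) (\<lambda>g. b k * (sgn (\<Sum>j<n. a j * g j) * g k))"
    using sgn_coord(1)[OF S] by auto
  show "integrable (gauss_vec n) (\<lambda>g. sgn (\<Sum>j<n. a j * g j) * (\<Sum>j<n. b j * g j))"
    unfolding e by (rule Bochner_Integration.integrable_sum) (use i in auto)
  have "(\<integral>g. sgn (\<Sum>j<n. a j * g j) * (\<Sum>j<n. b j * g j) \<partial>gauss_vec n)
     = (\<Sum>k<n. b k * (\<integral>g. sgn (\<Sum>j<n. a j * g j) * g k \<partial>gauss_vec n))"
    unfolding e using i by (subst Bochner_Integration.integral_sum) auto
  also have "\<dots> = (\<Sum>k<n. b k * (sqrt (2 / pi) * a k / sqrt (\<Sum>j<n. (a j)\<^sup>2)))"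
    by (intro sum.cong refl) (simp add: sgn_coord(2)[OF S])
  also have "\<dots> = sqrt (2 / pi) * (\<Sum>j<n. a j * b j) / sqrt (\<Sum>j<n. (a j)\<^sup>2)"
    by (simp add: sum_distrib_left sum_divide_distrib algebra_simps)
  finally show "(\<integral>g. sgn (\<Sum>j<n. a j * g j) * (\<Sum>j<n. b j * g j) \<partial>gauss_vec n)
       = sqrt (2 / pi) * (\<Sum>j<n. a j * b j) / sqrt (\<Sum>j<n. (a j)\<^sup>2)" .
qed

lemma sgn_sgn_integrable:
  "integrable (gauss_vec n) (\<lambda>g. sgn (\<Sum>j<n. a j * g j) * sgn (\<Sum>j<n. b j * g j))"
proof -
  interpret prob_space "gauss_vec n" by (rule gauss_prob)
  show ?thesis
    by (rule Bochner_Integration.integrable_bound[of _ "\<lambda>_. 1::real"])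
       (auto simp: abs_mult abs_sgn_eq)
qed

lemma prob_main:
  fixes U :: "nat \<Rightarrow> nat \<Rightarrow> real" and n :: nat
  defines "A \<equiv> \<lambda>i g. \<Sum>k<n. U i k * g k"
  defines "N \<equiv> \<lambda>i. \<Sum>k<n. (U i k)\<^sup>2"
  defines "Z \<equiv> \<lambda>i g. sgn (A i g) - sqrt (2 / pi) * (A i g / sqrt (N i))"
  defines "K \<equiv> \<lambda>i j. \<integral>g. Z i g * Z j g \<partial>gauss_vec n"
  assumes pos: "\<forall>i<n. 0 < N i"
  shows "\<forall>i<n. \<forall>j<n. (\<integral>g. sgn (A i g) * sgn (A j g) \<partial>gauss_vec n)
            = K i j + 2 / pi * (\<Sum>k<n. U i k * U j k) / (sqrt (N i) * sqrt (N j))"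
    and "\<forall>v. 0 \<le> (\<Sum>i<n. \<Sum>j<n. v i * K i j * v j)"
    and "\<forall>i<n. K i i \<le> 1 - 2 / pi"
    and "\<forall>i j. K i j = K j i"
proof -
  interpret prob_space "gauss_vec n" by (rule gauss_prob)
  define c where "c = sqrt (2 / pi)"
  have c2: "c * c = 2 / pi" unfolding c_def by simp
  have expand: "Z i g * Z j g = sgn (A i g) * sgn (A j g) - (c / sqrt (N j)) * (sgn (A i g) * A j g)
     - (c / sqrt (N i)) * (sgn (A j g) * A i g) + (c * c / (sqrt (N i) * sqrt (N j))) * (A i g * A j g)" for i j g
    unfolding Z_def c_def[symmetric] by (simp add: divide_inverse algebra_simps)
  have iss: "integrable (gauss_vec n) (\<lambda>g. sgn (A i g) * sgn (A j g))" for i j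
    unfolding A_def by (rule sgn_sgn_integrable)
  have isl: "integrable (gauss_vec n) (\<lambda>g. sgn (A i g) * A j g)" if "i < n" for i j
    unfolding A_def by (rule sgn_lin(1)) (use pos that in \<open>simp add: N_def\<close>)
  have ill: "integrable (gauss_vec n) (\<lambda>g. A i g * A j g)" for i j
    unfolding A_def by (rule lin_prod(1))
  have izz: "integrable (gauss_vec n) (\<lambda>g. Z i g * Z j g)" if "i < n" "j < n" for i j
    unfolding expand
    by (intro Bochner_Integration.integrable_add Bochner_Integration.integrable_diff
        integrable_mult_right iss isl ill that)
  have Kexp: "K i j = (\<integral>g. sgn (A i g) * sgn (A j g) \<partial>gauss_vec n) - c * c * (\<Sum>k<n. U i k * U j k) / (sqrt (N i) * sqrt (N j))"
    if "i < n" "j < n" for i j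
  proof -
    have Ni: "0 < N i" and Nj: "0 < N j" using pos that by auto
    have e1: "(\<integral>g. sgn (A i g) * A j g \<partial>gauss_vec n) = c * (\<Sum>k<n. U i k * U j k) / sqrt (N i)"
      unfolding A_def N_def c_def by (rule sgn_lin(2)) (use Ni in \<open>simp add: N_def\<close>)
    have e2: "(\<integral>g. sgn (A j g) * A i g \<partial>gauss_vec n) = c * (\<Sum>k<n. U i k * U j k) / sqrt (N j)"
      unfolding A_def N_def c_def by (subst sgn_lin(2)) (use Nj in \<open>simp_all add: N_def mult.commute\<close>)
    have e3: "(\<integral>g. A i g * A j g \<partial>gauss_vec n) = (\<Sum>k<n. U i k * U j k)"
      unfolding A_def by (rule lin_prod(2))
    have "K i j = (\<integral>g. sgn (A i g) * sgn (A j g) \<partial>gauss_vec n) - (c / sqrt (N j)) * (\<integral>g. sgn (A i g) * A j g \<partial>gauss_vec n)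
       - (c / sqrt (N i)) * (\<integral>g. sgn (A j g) * A i g \<partial>gauss_vec n) + (c * c / (sqrt (N i) * sqrt (N j))) * (\<integral>g. A i g * A j g \<partial>gauss_vec n)"
      unfolding K_def expand
      by (simp add: iss isl ill that Bochner_Integration.integrable_add Bochner_Integration.integrable_diff)
    also have "\<dots> = (\<integral>g. sgn (A i g) * sgn (A j g) \<partial>gauss_vec n) - c * c * (\<Sum>k<n. U i k * U j k) / (sqrt (N i) * sqrt (N j))"
      unfolding e1 e2 e3 by (simp add: divide_inverse algebra_simps)
    finally show ?thesis .
  qed
  show "\<forall>i<n. \<forall>j<n. (\<integral>g. sgn (A i g) * sgn (A j g) \<partial>gauss_vec n)
            = K i j + 2 / pi * (\<Sum>k<n. U i k * U j k) / (sqrt (N i) * sqrt (N j))"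
    using Kexp c2 by simp
  show "\<forall>i j. K i j = K j i" unfolding K_def by (simp add: mult.commute)
  show "\<forall>v. 0 \<le> (\<Sum>i<n. \<Sum>j<n. v i * K i j * v j)"
  proof
    fix v :: "nat \<Rightarrow> real"
    have "(\<Sum>i<n. \<Sum>j<n. v i * K i j * v j) = (\<Sum>i<n. \<Sum>j<n. (\<integral>g. v i * (Z i g * Z j g) * v j \<partial>gauss_vec n))"
      unfolding K_def by simp
    also have "\<dots> = (\<Sum>i<n. (\<integral>g. (\<Sum>j<n. v i * (Z i g * Z j g) * v j) \<partial>gauss_vec n))"
      by (intro sum.cong refl, subst Bochner_Integration.integral_sum) (auto intro!: izz)
    also have "\<dots> = (\<integral>g. (\<Sum>i<n. \<Sum>j<n. v i * (Z i g * Z j g) * v j) \<partial>gauss_vec n)"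
      by (subst Bochner_Integration.integral_sum) (auto intro!: izz Bochner_Integration.integrable_sum)
    also have "\<dots> = (\<integral>g. (\<Sum>i<n. v i * Z i g)\<^sup>2 \<partial>gauss_vec n)"
      by (simp add: power2_eq_square sum_distrib_left sum_distrib_right algebra_simps)
    also have "\<dots> \<ge> 0" by simp
    finally show "0 \<le> (\<Sum>i<n. \<Sum>j<n. v i * K i j * v j)" .
  qed
  show "\<forall>i<n. K i i \<le> 1 - 2 / pi"
  proof safe
    fix i assume i: "i < n"
    have Ni: "0 < N i" using pos i by auto
    have "(\<Sum>k<n. U i k * U i k) = N i" unfolding N_def by (simp add: power2_eq_square)
    then have r: "(\<Sum>k<n. U i k * U i k) / (sqrt (N i) * sqrt (N i)) = 1" using Ni by simp
    have "(\<integral>g. sgn (A i g) * sgn (A i g) \<partial>gauss_vec n) \<le> (\<integral>g. 1 \<partial>gauss_vec n)"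
      by (intro integral_mono iss) (auto simp: sgn_if)
    moreover have "(\<integral>g. 1 \<partial>gauss_vec n) = (1::real)" using prob_space by simp
    ultimately have "(\<integral>g. sgn (A i g) * sgn (A i g) \<partial>gauss_vec n) \<le> 1" by linarith
    moreover have "c * c * (\<Sum>k<n. U i k * U i k) / (sqrt (N i) * sqrt (N i)) = 2 / pi"
      using r c2 by (metis mult.right_neutral times_divide_eq_right)
    ultimately show "K i i \<le> 1 - 2 / pi" using Kexp[OF i i] by linarith
  qed
qed



definition quad :: "nat \<Rightarrow> (nat \<Rightarrow> nat \<Rightarrow> real) \<Rightarrow> (nat \<Rightarrow> real) \<Rightarrow> real" where
  "quad n A v = (\<Sum>i<n. \<Sum>j<n. v i * A i j * v j)"

definition nsq :: "nat \<Rightarrow> (nat \<Rightarrow> real) \<Rightarrow> real" where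
  "nsq n v = (\<Sum>i<n. (v i)\<^sup>2)"

definition mv :: "nat \<Rightarrow> (nat \<Rightarrow> nat \<Rightarrow> real) \<Rightarrow> (nat \<Rightarrow> real) \<Rightarrow> nat \<Rightarrow> real" where
  "mv n A v = (\<lambda>i. \<Sum>j<n. A i j * v j)"

definition symm :: "nat \<Rightarrow> (nat \<Rightarrow> nat \<Rightarrow> real) \<Rightarrow> bool" where
  "symm n A \<longleftrightarrow> (\<forall>i<n. \<forall>j<n. A i j = A j i)"

lemma quad_mv: "quad n A v = (\<Sum>i<n. v i * mv n A v i)"
  unfolding quad_def mv_def by (simp add: sum_distrib_left mult.assoc)

lemma mv_sym_sum:
  assumes "symm n A"
  shows "(\<Sum>i<n. w i * mv n A v i) = (\<Sum>i<n. v i * mv n A w i)"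
proof -
  have "(\<Sum>i<n. w i * mv n A v i) = (\<Sum>i<n. \<Sum>j<n. w i * A i j * v j)"
    unfolding mv_def by (simp add: sum_distrib_left mult.assoc)
  also have "\<dots> = (\<Sum>j<n. \<Sum>i<n. w i * A i j * v j)" by (rule sum.swap)
  also have "\<dots> = (\<Sum>j<n. v j * mv n A w j)"
    unfolding mv_def using assms unfolding symm_def
    by (intro sum.cong refl) (simp add: sum_distrib_left mult.commute mult.left_commute)
  finally show ?thesis .
qed

lemma quad_add:
  assumes "symm n A"
  shows "quad n A (\<lambda>i. v i + t * w i) = quad n A v + 2 * t * (\<Sum>i<n. w i * mv n A v i) + t\<^sup>2 * quad n A w"
proof -
  have "quad n A (\<lambda>i. v i + t * w i) = quad n A v + t * (\<Sum>i<n. w i * mv n A v i)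
      + t * (\<Sum>i<n. v i * mv n A w i) + t\<^sup>2 * quad n A w"
    unfolding quad_def mv_def
    by (simp add: algebra_simps sum.distrib sum_distrib_left power2_eq_square)
  then show ?thesis using mv_sym_sum[OF assms, of w v] by simp
qed

lemma psd_zero:
  assumes S: "symm n A" and P: "\<And>w. 0 \<le> quad n A w" and Z: "quad n A v = 0"
  shows "\<forall>i<n. mv n A v i = 0"
proof -
  define w where "w = mv n A v"
  define b where "b = (\<Sum>i<n. w i * mv n A v i)"
  define Q where "Q = quad n A w"
  have Q0: "0 \<le> Q" unfolding Q_def by (rule P)
  have ineq: "0 \<le> 2 * t * b + t\<^sup>2 * Q" for t
    using P[of "\<lambda>i. v i + t * w i"] unfolding quad_add[OF S] Z b_def Q_def by simp
  have b0: "b = 0"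
  proof (rule ccontr)
    assume "b \<noteq> 0"
    then have bb: "0 < b * b" by (auto simp: zero_less_mult_iff linorder_neq_iff)
    show False
    proof (cases "Q = 0")
      case True
      then show False using ineq[of "-b"] bb by simp
    next
      case False
      then have Qp: "0 < Q" using Q0 by simp
      have "2 * (-b/Q) * b + (-b/Q)\<^sup>2 * Q = -(b*b)/Q"
        using Qp by (simp add: power2_eq_square field_simps)
      also have "\<dots> < 0" using bb Qp by simp
      finally show False using ineq[of "-b/Q"] by simp
    qed
  qed
  have "(\<Sum>i<n. (w i)\<^sup>2) = 0" using b0 unfolding b_def w_def by (simp add: power2_eq_square)
  then have "\<forall>i\<in>{..<n}. (w i)\<^sup>2 = 0" by (subst sum_nonneg_eq_0_iff[symmetric]) auto
  then show ?thesis unfolding w_def by auto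
qed

lemma quad_cont: "continuous_on X (quad n A)"
  unfolding quad_def
  by (intro continuous_intros continuous_on_compose2[OF continuous_on_product_coordinates]) auto

lemma nsq_cont: "continuous_on X (nsq n)"
  unfolding nsq_def
  by (intro continuous_intros continuous_on_compose2[OF continuous_on_product_coordinates]) auto

lemma nsq_zero: "nsq n w = 0 \<Longrightarrow> i < n \<Longrightarrow> w i = 0"
proof -
  assume "nsq n w = 0" "i < n"
  then have "\<forall>i\<in>{..<n}. (w i)\<^sup>2 = 0" unfolding nsq_def by (subst sum_nonneg_eq_0_iff[symmetric]) auto
  then show "w i = 0" using \<open>i < n\<close> by auto
qed

lemma nsq_nonneg: "0 \<le> nsq n w" unfolding nsq_def by (simp add: sum_nonneg)

lemma quad_zero: "nsq n w = 0 \<Longrightarrow> quad n A w = 0"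
  unfolding quad_def using nsq_zero[of n w] by simp

lemma compact_sphere_fun: "compact {v::nat\<Rightarrow>real. (\<forall>i. n \<le> i \<longrightarrow> v i = 0) \<and> nsq n v = 1}"
proof -
  define P where "P = PiE UNIV (\<lambda>i::nat. if i < n then {-1..1::real} else {0})"
  have "compactin (product_topology (\<lambda>_. euclidean) UNIV) P"
    unfolding P_def by (subst compactin_PiE) auto
  then have cP: "compact P" by (simp add: euclidean_product_topology)
  have cl: "closed {v::nat\<Rightarrow>real. (\<forall>i. n \<le> i \<longrightarrow> v i = 0) \<and> nsq n v = 1}"
  proof -
    have "closed {v::nat\<Rightarrow>real. n \<le> i \<longrightarrow> v i = 0}" for i
    proof (cases "n \<le> i")
      case True
      then show ?thesis
        by (simp, intro closed_Collect_eq continuous_on_product_coordinates continuous_on_const)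
    qed simp
    then have "closed {v::nat\<Rightarrow>real. \<forall>i. n \<le> i \<longrightarrow> v i = 0}" by (intro closed_Collect_all)
    moreover have "closed {v::nat\<Rightarrow>real. nsq n v = 1}"
      by (intro closed_Collect_eq nsq_cont continuous_on_const)
    ultimately show ?thesis by (simp add: Collect_conj_eq closed_Int)
  qed
  have sub: "{v::nat\<Rightarrow>real. (\<forall>i. n \<le> i \<longrightarrow> v i = 0) \<and> nsq n v = 1} \<subseteq> P"
  proof
    fix v :: "nat \<Rightarrow> real" assume v: "v \<in> {v. (\<forall>i. n \<le> i \<longrightarrow> v i = 0) \<and> nsq n v = 1}"
    have "\<bar>v i\<bar> \<le> 1" if "i < n" for i
    proof -
      have "(v i)\<^sup>2 \<le> nsq n v" unfolding nsq_def
        by (rule member_le_sum[of i "{..<n}" "\<lambda>i. (v i)\<^sup>2"]) (use that in auto)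
      then have "(v i)\<^sup>2 \<le> 1\<^sup>2" using v by simp
      then show ?thesis using abs_le_square_iff[of "v i" 1] by simp
    qed
    then show "v \<in> P" using v unfolding P_def by (auto simp: abs_le_iff)
  qed
  have "compact (P \<inter> {v::nat\<Rightarrow>real. (\<forall>i. n \<le> i \<longrightarrow> v i = 0) \<and> nsq n v = 1})"
    by (rule compact_Int_closed[OF cP cl])
  then show ?thesis using sub by (simp add: Int_absorb1)
qed

lemma eigen_max:
  assumes n: "0 < n" and S: "symm n A"
  shows "\<exists>v l. nsq n v = 1 \<and> (\<forall>i<n. mv n A v i = l * v i) \<and> (\<forall>w. quad n A w \<le> l * nsq n w)"
proof -
  define K where "K = {v::nat\<Rightarrow>real. (\<forall>i. n \<le> i \<longrightarrow> v i = 0) \<and> nsq n v = 1}"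
  have cK: "compact K" unfolding K_def by (rule compact_sphere_fun)
  have "nsq n (\<lambda>i. if i = 0 then 1 else 0) = (\<Sum>i<n. if i = 0 then 1 else 0)"
    unfolding nsq_def by (intro sum.cong) auto
  then have "(\<lambda>i. if i = 0 then 1 else 0) \<in> K"
    unfolding K_def using n by auto
  then have neK: "K \<noteq> {}" by auto
  obtain v where vK: "v \<in> K" and vmax: "\<forall>y\<in>K. quad n A y \<le> quad n A v"
    using continuous_attains_sup[OF cK neK quad_cont] by blast
  define l where "l = quad n A v"
  have nv: "nsq n v = 1" using vK unfolding K_def by auto
  have bound: "quad n A w \<le> l * nsq n w" for w
  proof (cases "nsq n w = 0")
    case True
    then show ?thesis by (simp add: quad_zero)
  next
    case False
    define s where "s = sqrt (nsq n w)"
    have sp: "0 < s" unfolding s_def using False nsq_nonneg[of n w] by simp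
    have ss: "s * s = nsq n w" unfolding s_def using nsq_nonneg[of n w] by simp
    define w' where "w' i = (if i < n then w i / s else 0)" for i
    have "nsq n w' = nsq n w / (s * s)"
      unfolding nsq_def w'_def by (simp add: power_divide sum_divide_distrib power2_eq_square)
    then have "nsq n w' = 1" using ss False by simp
    then have "w' \<in> K" unfolding K_def w'_def by auto
    then have le: "quad n A w' \<le> l" using vmax unfolding l_def by auto
    have "quad n A w' = quad n A w / (s * s)"
      unfolding quad_def w'_def by (simp add: sum_divide_distrib)
    then have "quad n A w / (s * s) \<le> l" using le by simp
    moreover have "0 < nsq n w" using sp ss by (metis mult_pos_pos)
    ultimately show ?thesis using ss by (simp add: pos_divide_le_eq)
  qed
  define B where "B i j = (if i = j then l else 0) - A i j" for i j
  have SB: "symm n B" using S unfolding symm_def B_def by auto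
  have mvB: "mv n B u i = l * u i - mv n A u i" if "i < n" for u i
  proof -
    have "mv n B u i = (\<Sum>j<n. (if i = j then l * u j else 0) - A i j * u j)"
      unfolding mv_def B_def by (intro sum.cong) (auto simp: algebra_simps)
    also have "\<dots> = (\<Sum>j<n. (if i = j then l * u j else 0)) - mv n A u i"
      unfolding mv_def by (simp add: sum_subtractf)
    finally show ?thesis using that by simp
  qed
  have qB: "quad n B u = l * nsq n u - quad n A u" for u
  proof -
    have "quad n B u = (\<Sum>i<n. u i * (l * u i - mv n A u i))"
      unfolding quad_mv by (intro sum.cong) (auto simp: mvB)
    then show ?thesis unfolding quad_mv nsq_def
      by (simp add: right_diff_distrib sum_subtractf sum_distrib_left power2_eq_square algebra_simps)
  qed
  have "\<forall>i<n. mv n B v i = 0"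
    by (rule psd_zero[OF SB]) (use bound nv in \<open>auto simp: qB l_def\<close>)
  then have "\<forall>i<n. mv n A v i = l * v i" using mvB by auto
  then show ?thesis using nv bound by blast
qed

definition idm :: "nat \<Rightarrow> nat \<Rightarrow> real" where
  "idm i j = (if i = j then 1 else 0)"

lemma mm_assoc: "mat_mult n (mat_mult n X Y) Z = mat_mult n X (mat_mult n Y Z)"
proof (intro ext)
  fix i j
  have "mat_mult n (mat_mult n X Y) Z i j = (\<Sum>k<n. \<Sum>l<n. X i l * Y l k * Z k j)"
    unfolding mat_mult_def by (simp add: sum_distrib_right)
  also have "\<dots> = (\<Sum>l<n. \<Sum>k<n. X i l * Y l k * Z k j)" by (rule sum.swap)
  also have "\<dots> = mat_mult n X (mat_mult n Y Z) i j"
    unfolding mat_mult_def by (simp add: sum_distrib_left mult.assoc)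
  finally show "mat_mult n (mat_mult n X Y) Z i j = mat_mult n X (mat_mult n Y Z) i j" .
qed

lemma mm_id_right: "j < n \<Longrightarrow> mat_mult n X idm i j = X i j"
proof -
  assume j: "j < n"
  have "mat_mult n X idm i j = (\<Sum>k<n. if k = j then X i k else 0)"
    unfolding mat_mult_def idm_def by (intro sum.cong) auto
  then show ?thesis using j by simp
qed

lemma mm_id_left: "i < n \<Longrightarrow> mat_mult n idm X i j = X i j"
proof -
  assume i: "i < n"
  have "mat_mult n idm X i j = (\<Sum>k<n. if i = k then X k j else 0)"
    unfolding mat_mult_def idm_def by (intro sum.cong) auto
  then show ?thesis using i by simp
qed

lemma mm_cong_left: "(\<forall>k<n. \<forall>l<n. Z k l = Z' k l) \<Longrightarrow> i < n \<Longrightarrow> mat_mult n Z Y i j = mat_mult n Z' Y i j"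
  unfolding mat_mult_def by (intro sum.cong) auto

lemma mm_cong_right: "(\<forall>k<n. \<forall>l<n. Z k l = Z' k l) \<Longrightarrow> j < n \<Longrightarrow> mat_mult n Y Z i j = mat_mult n Y Z' i j"
  unfolding mat_mult_def by (intro sum.cong) auto

lemma mm_inner_cong: "(\<forall>k<n. \<forall>l<n. Z k l = Z' k l) \<Longrightarrow> mat_mult n X (mat_mult n Z Y) = mat_mult n X (mat_mult n Z' Y)"
  unfolding mat_mult_def by (intro ext sum.cong refl) (auto intro!: sum.cong)

lemma mm_id_inner: "mat_mult n X (mat_mult n idm Y) = mat_mult n X Y"
  unfolding mat_mult_def by (intro ext sum.cong refl) (simp add: mm_id_left[unfolded mat_mult_def])

lemma symm_conj:
  assumes "symm n H" "symm n X"
  shows "symm n (mat_mult n (mat_mult n H X) H)"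
proof -
  have "mat_mult n (mat_mult n H X) H i j = (\<Sum>k<n. \<Sum>l<n. H i l * X l k * H k j)" for i j
    unfolding mat_mult_def by (simp add: sum_distrib_right)
  moreover have "(\<Sum>k<n. \<Sum>l<n. H i l * X l k * H k j) = (\<Sum>k<n. \<Sum>l<n. H j l * X l k * H k i)"
    if "i < n" "j < n" for i j
  proof -
    have "(\<Sum>k<n. \<Sum>l<n. H i l * X l k * H k j) = (\<Sum>l<n. \<Sum>k<n. H i l * X l k * H k j)" by (rule sum.swap)
    also have "\<dots> = (\<Sum>l<n. \<Sum>k<n. H j k * X k l * H l i)"
      using assms that unfolding symm_def by (intro sum.cong refl) (simp add: mult_ac)
    finally show ?thesis .
  qed
  ultimately show ?thesis unfolding symm_def by simp
qed

lemma mv_mm: "mv n (mat_mult n P Q) x = mv n P (mv n Q x)"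
proof (intro ext)
  fix i
  have "mv n (mat_mult n P Q) x i = (\<Sum>j<n. \<Sum>k<n. P i k * Q k j * x j)"
    unfolding mv_def mat_mult_def by (simp add: sum_distrib_right)
  also have "\<dots> = (\<Sum>k<n. \<Sum>j<n. P i k * Q k j * x j)" by (rule sum.swap)
  also have "\<dots> = mv n P (mv n Q x) i"
    unfolding mv_def by (simp add: sum_distrib_left mult.assoc)
  finally show "mv n (mat_mult n P Q) x i = mv n P (mv n Q x) i" .
qed

lemma quad_conj:
  assumes "symm n H"
  shows "quad n (mat_mult n (mat_mult n H X) H) x = quad n X (mv n H x)"
proof -
  have "quad n (mat_mult n (mat_mult n H X) H) x = (\<Sum>i<n. x i * mv n H (mv n X (mv n H x)) i)"
    unfolding quad_mv mv_mm ..
  also have "\<dots> = (\<Sum>i<n. mv n X (mv n H x) i * mv n H x i)"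
    by (rule mv_sym_sum[OF assms])
  also have "\<dots> = quad n X (mv n H x)"
    unfolding quad_mv by (simp add: mult.commute)
  finally show ?thesis .
qed

lemma psd_iff: "mat_psd n A \<longleftrightarrow> symm n A \<and> (\<forall>v. 0 \<le> quad n A v)"
  unfolding mat_psd_def symm_def quad_def by simp

lemma psd_conj:
  assumes "symm n H" "mat_psd n X"
  shows "mat_psd n (mat_mult n (mat_mult n H X) H)"
  using assms symm_conj quad_conj unfolding psd_iff by metis

lemma householder:
  assumes m: "m < n" and v: "nsq n v = 1"
  shows "\<exists>H. symm n H \<and> (\<forall>i<n. \<forall>j<n. mat_mult n H H i j = idm i j) \<and> (\<forall>i<n. H i m = v i)"
proof -
  have split: "nsq n u = (u m)\<^sup>2 + (\<Sum>i\<in>{..<n}-{m}. (u i)\<^sup>2)" for u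
    unfolding nsq_def using m by (subst sum.remove[of _ m]) auto
  have "0 \<le> (\<Sum>i\<in>{..<n}-{m}. (v i)\<^sup>2)" by (simp add: sum_nonneg)
  then have vm: "(v m)\<^sup>2 \<le> 1" using split[of v] v by linarith
  show ?thesis
  proof (cases "v m = 1")
    case True
    then have "(\<Sum>i\<in>{..<n}-{m}. (v i)\<^sup>2) = 0" using split[of v] v by simp
    then have "\<forall>i\<in>{..<n}-{m}. (v i)\<^sup>2 = 0" by (subst sum_nonneg_eq_0_iff[symmetric]) auto
    then have vi: "\<And>i. i < n \<Longrightarrow> i \<noteq> m \<Longrightarrow> v i = 0" by auto
    show ?thesis
    proof (intro exI[of _ idm] conjI allI impI)
      show "symm n idm" unfolding symm_def idm_def by auto
      show "mat_mult n idm idm i j = idm i j" if "i < n" for i j using mm_id_left[OF that] .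
      show "idm i m = v i" if "i < n" for i using vi[OF that] True unfolding idm_def by auto
    qed
  next
    case False
    have "\<bar>v m\<bar> \<le> 1" using vm abs_le_square_iff[of "v m" 1] by simp
    then have vm1: "v m < 1" using False by linarith
    define w where "w i = idm i m - v i" for i
    define d where "d = nsq n w"
    have wm: "w m = 1 - v m" unfolding w_def idm_def by simp
    have "d = (w m)\<^sup>2 + (\<Sum>i\<in>{..<n}-{m}. (v i)\<^sup>2)"
      unfolding d_def split[of w] by (simp add: w_def idm_def)
    also have "\<dots> = (1 - v m)\<^sup>2 + (1 - (v m)\<^sup>2)" using split[of v] v wm by simp
    finally have dv: "d = 2 * (1 - v m)" by (simp add: power2_eq_square algebra_simps)
    then have dpos: "0 < d" using vm1 by simp
    define c where "c = 2 / d"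
    define H where "H i j = idm i j - c * w i * w j" for i j
    have symH: "symm n H" unfolding symm_def H_def idm_def by (auto simp: mult_ac)
    have HH: "mat_mult n H H i j = idm i j" if i: "i < n" and j: "j < n" for i j
    proof -
      have "mat_mult n H H i j = (\<Sum>k<n. idm i k * idm k j) - (\<Sum>k<n. idm i k * w k) * (c * w j)
          - (c * w i) * (\<Sum>k<n. w k * idm k j) + c * c * w i * w j * (\<Sum>k<n. w k * w k)"
        unfolding mat_mult_def H_def
        by (simp add: algebra_simps sum.distrib sum_subtractf sum_distrib_left sum_distrib_right)
      also have "(\<Sum>k<n. idm i k * idm k j) = idm i j" using mm_id_left[OF i, of idm j] unfolding mat_mult_def .
      also have "(\<Sum>k<n. idm i k * w k) = w i"
      proof -
        have "(\<Sum>k<n. idm i k * w k) = (\<Sum>k<n. if i = k then w k else 0)"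
          unfolding idm_def by (intro sum.cong) auto
        then show ?thesis using i by simp
      qed
      also have "(\<Sum>k<n. w k * idm k j) = w j"
      proof -
        have "(\<Sum>k<n. w k * idm k j) = (\<Sum>k<n. if k = j then w k else 0)"
          unfolding idm_def by (intro sum.cong) auto
        then show ?thesis using j by simp
      qed
      also have "(\<Sum>k<n. w k * w k) = d" unfolding d_def nsq_def by (simp add: power2_eq_square)
      finally have "mat_mult n H H i j = idm i j - 2 * c * w i * w j + c * c * d * w i * w j"
        by (simp add: algebra_simps)
      moreover have ccd: "c * c * d = 2 * c" unfolding c_def using dpos by (simp add: field_simps)
      moreover have "c * c * d * w i * w j = 2 * c * w i * w j"
        using ccd by (metis mult.assoc)
      ultimately show ?thesis by linarith
    qed
    have Hm: "H i m = v i" if "i < n" for i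
    proof -
      have "c * w m = 1" unfolding c_def wm dv using vm1 by simp
      then have "H i m = idm i m - w i" unfolding H_def by (simp add: mult_ac)
      then show ?thesis unfolding w_def by simp
    qed
    show ?thesis using symH HH Hm by blast
  qed
qed

lemma mv_cong: "(\<forall>k<n. x k = y k) \<Longrightarrow> mv n A x = mv n A y"
  unfolding mv_def by (intro ext sum.cong) auto

lemma quad_cong: "(\<forall>k<n. x k = y k) \<Longrightarrow> (\<forall>i<n. \<forall>j<n. A i j = A' i j) \<Longrightarrow> quad n A x = quad n A' y"
  unfolding quad_def by (intro sum.cong refl) auto

lemma quad_Suc: "quad (Suc m) B y = quad m B y + y m * (\<Sum>j<m. B m j * y j) + (\<Sum>i<m. y i * B i m) * y m + y m * B m m * y m"
  unfolding quad_def by (simp add: sum.distrib sum_distrib_left sum_distrib_right algebra_simps)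

lemma mm_Suc: "mat_mult (Suc m) X Y i j = mat_mult m X Y i j + X i m * Y m j"
  unfolding mat_mult_def by simp

lemma sqrt_exists:
  "mat_psd n A \<Longrightarrow> \<exists>S. mat_psd n S \<and> (\<forall>i<n. \<forall>j<n. mat_mult n S S i j = A i j)"
proof (induction n arbitrary: A)
  case 0
  then show ?case by (intro exI[of _ A]) simp
next
  case (Suc m)
  define n where "n = Suc m"
  have symA: "symm n A" and PA: "\<And>x. 0 \<le> quad n A x" using Suc.prems unfolding psd_iff n_def by auto
  obtain v l where nv: "nsq n v = 1" and ev: "\<forall>i<n. mv n A v i = l * v i"
    using eigen_max[of n A] symA unfolding n_def by auto
  have "quad n A v = (\<Sum>i<n. v i * (l * v i))" unfolding quad_mv by (intro sum.cong) (auto simp: ev)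
  also have "\<dots> = l * nsq n v" unfolding nsq_def by (simp add: sum_distrib_left power2_eq_square mult_ac)
  finally have "quad n A v = l" using nv by simp
  then have l0: "0 \<le> l" using PA[of v] by simp
  obtain H where symH: "symm n H" and HH: "\<forall>i<n. \<forall>j<n. mat_mult n H H i j = idm i j"
      and Hm: "\<forall>i<n. H i m = v i"
    using householder[of m n v] nv unfolding n_def by auto
  define B where "B = mat_mult n (mat_mult n H A) H"
  have PB: "mat_psd n B" unfolding B_def by (rule psd_conj[OF symH Suc.prems[folded n_def]])
  then have symB: "symm n B" and PBq: "\<And>x. 0 \<le> quad n B x" unfolding psd_iff by auto
  have Bm: "B i m = l * idm i m" if i: "i < n" for i
  proof -
    have "B i m = mv n (mat_mult n H A) (\<lambda>k. H k m) i" unfolding B_def mat_mult_def mv_def ..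
    also have "\<dots> = mv n (mat_mult n H A) v i"
      by (rule arg_cong[where f="\<lambda>x. x i"], rule mv_cong) (use Hm in auto)
    also have "\<dots> = mv n H (mv n A v) i" by (simp add: mv_mm)
    also have "\<dots> = mv n H (\<lambda>k. l * H k m) i"
      by (rule arg_cong[where f="\<lambda>x. x i"], rule mv_cong) (simp add: ev Hm)
    also have "\<dots> = l * mat_mult n H H i m" unfolding mv_def mat_mult_def by (simp add: sum_distrib_left mult_ac)
    also have "\<dots> = l * idm i m" using HH i unfolding n_def by simp
    finally show ?thesis .
  qed
  have mB: "B m j = l * idm m j" if "j < n" for j
    using Bm[OF that] symB that unfolding symm_def idm_def n_def by auto
  have PB': "mat_psd m B"
    unfolding psd_iff
  proof (intro conjI allI)
    show "symm m B" using symB unfolding symm_def n_def by auto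
    fix x
    have "quad n B (x(m := 0)) = quad m B (x(m := 0))" unfolding n_def quad_Suc by simp
    also have "\<dots> = quad m B x" by (intro quad_cong) auto
    finally show "0 \<le> quad m B x" using PBq[of "x(m := 0)"] by simp
  qed
  obtain T' where PT': "mat_psd m T'" and TT': "\<forall>i<m. \<forall>j<m. mat_mult m T' T' i j = B i j"
    using Suc.IH[OF PB'] by auto
  define T where "T i j = (if i < m \<and> j < m then T' i j else if i = m \<and> j = m then sqrt l else 0)" for i j
  have PT: "mat_psd n T"
    unfolding psd_iff
  proof (intro conjI allI)
    show "symm n T" using PT' unfolding symm_def psd_iff T_def n_def by auto
    fix x
    have "quad n T x = quad m T x + sqrt l * (x m)\<^sup>2"
      unfolding n_def quad_Suc T_def by (simp add: power2_eq_square)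
    also have "quad m T x = quad m T' x" by (intro quad_cong) (auto simp: T_def)
    finally show "0 \<le> quad n T x" using PT' l0 unfolding psd_iff by (simp add: add_nonneg_nonneg)
  qed
  have TT: "mat_mult n T T i j = B i j" if i: "i < n" and j: "j < n" for i j
  proof -
    have e: "mat_mult n T T i j = mat_mult m T T i j + T i m * T m j" unfolding n_def by (rule mm_Suc)
    consider "i < m" "j < m" | "i < m" "j = m" | "i = m" "j < m" | "i = m" "j = m"
      using i j unfolding n_def by linarith
    then show ?thesis
    proof cases
      case 1
      have "mat_mult m T T i j = mat_mult m T' T' i j"
        unfolding mat_mult_def using 1 by (intro sum.cong) (auto simp: T_def)
      then show ?thesis using e 1 TT' by (simp add: T_def)
    next
      case 2
      have "mat_mult m T T i j = 0" unfolding mat_mult_def using 2 by (simp add: T_def)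
      then show ?thesis using e 2 Bm[OF i] by (simp add: T_def idm_def)
    next
      case 3
      have "mat_mult m T T i j = 0" unfolding mat_mult_def using 3 by (simp add: T_def)
      then show ?thesis using e 3 mB[OF j] by (simp add: T_def idm_def)
    next
      case 4
      have "mat_mult m T T i j = 0" unfolding mat_mult_def using 4 by (simp add: T_def)
      then show ?thesis using e 4 Bm[OF i] l0 by (simp add: T_def idm_def)
    qed
  qed
  define S where "S = mat_mult n (mat_mult n H T) H"
  have PS: "mat_psd n S" unfolding S_def by (rule psd_conj[OF symH PT])
  have HH': "\<forall>k<n. \<forall>l<n. mat_mult n H H k l = idm k l" using HH by auto
  have TT2: "\<forall>k<n. \<forall>l<n. mat_mult n T T k l = B k l" using TT by auto
  have "mat_mult n S S = mat_mult n H (mat_mult n T (mat_mult n (mat_mult n H H) (mat_mult n T H)))"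
    unfolding S_def by (simp add: mm_assoc)
  also have "\<dots> = mat_mult n H (mat_mult n T (mat_mult n idm (mat_mult n T H)))"
    by (subst mm_inner_cong[OF HH']) rule
  also have "\<dots> = mat_mult n H (mat_mult n (mat_mult n T T) H)" by (simp add: mm_id_inner mm_assoc)
  also have "\<dots> = mat_mult n H (mat_mult n B H)" by (rule mm_inner_cong[OF TT2])
  also have "\<dots> = mat_mult n (mat_mult n H H) (mat_mult n A (mat_mult n H H))"
    unfolding B_def by (simp add: mm_assoc)
  finally have SS: "mat_mult n S S = mat_mult n (mat_mult n H H) (mat_mult n A (mat_mult n H H))" .
  have "mat_mult n S S i j = A i j" if i: "i < n" and j: "j < n" for i j
  proof -
    have "mat_mult n S S i j = mat_mult n idm (mat_mult n A (mat_mult n H H)) i j"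
      unfolding SS by (rule mm_cong_left[OF HH' i])
    also have "\<dots> = mat_mult n A (mat_mult n H H) i j" by (rule mm_id_left[OF i])
    also have "\<dots> = mat_mult n A idm i j" by (rule mm_cong_right[OF HH' j])
    also have "\<dots> = A i j" by (rule mm_id_right[OF j])
    finally show ?thesis .
  qed
  then show ?case using PS unfolding n_def by blast
qed

lemma sum_sq_mv: "symm n S \<Longrightarrow> quad n (mat_mult n S S) v = (\<Sum>i<n. (mv n S v i)\<^sup>2)"
  unfolding quad_mv mv_mm by (subst mv_sym_sum) (auto simp: power2_eq_square)

lemma sqrt_unique:
  assumes PS: "mat_psd n S" and PT: "mat_psd n T"
    and eq: "\<forall>i<n. \<forall>j<n. mat_mult n S S i j = mat_mult n T T i j"
  shows "\<forall>i<n. \<forall>j<n. S i j = T i j"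
proof (rule ccontr)
  assume ne: "\<not> (\<forall>i<n. \<forall>j<n. S i j = T i j)"
  have symS: "symm n S" and qS: "\<And>x. 0 \<le> quad n S x" using PS unfolding psd_iff by auto
  have symT: "symm n T" and qT: "\<And>x. 0 \<le> quad n T x" using PT unfolding psd_iff by auto
  define D where "D i j = S i j - T i j" for i j
  have symD: "symm n D" using symS symT unfolding symm_def D_def by auto
  have mvD: "mv n D x i = mv n S x i - mv n T x i" for x i
    unfolding mv_def D_def by (simp add: left_diff_distrib sum_subtractf)
  have "\<exists>x. quad n D x \<noteq> 0"
  proof (rule ccontr)
    assume "\<not> (\<exists>x. quad n D x \<noteq> 0)"
    then have z: "\<And>x. quad n D x = 0" by auto
    have "D i j = 0" if "i < n" "j < n" for i j
    proof -
      have "\<forall>i<n. mv n D (\<lambda>k. if k = j then 1 else 0) i = 0"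
        by (rule psd_zero[OF symD]) (simp_all add: z)
      moreover have "mv n D (\<lambda>k. if k = j then 1 else 0) i = D i j"
      proof -
        have "mv n D (\<lambda>k. if k = j then 1 else 0) i = (\<Sum>k<n. if k = j then D i k else 0)"
          unfolding mv_def by (intro sum.cong) auto
        then show ?thesis using that by simp
      qed
      ultimately show ?thesis using that by simp
    qed
    then show False using ne unfolding D_def by auto
  qed
  then obtain x0 where x0: "quad n D x0 \<noteq> 0" by auto
  have n: "0 < n" using x0 unfolding quad_def by (cases n) auto
  have "\<exists>v l. l \<noteq> 0 \<and> nsq n v = 1 \<and> (\<forall>i<n. mv n D v i = l * v i)"
  proof (cases "quad n D x0 > 0")
    case True
    obtain v l where "nsq n v = 1" "\<forall>i<n. mv n D v i = l * v i" "\<forall>w. quad n D w \<le> l * nsq n w"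
      using eigen_max[OF n symD] by auto
    moreover have "l \<noteq> 0"
    proof
      assume "l = 0"
      then show False using True \<open>\<forall>w. quad n D w \<le> l * nsq n w\<close> by (metis mult_zero_left not_le)
    qed
    ultimately show ?thesis by blast
  next
    case False
    then have neg: "quad n D x0 < 0" using x0 by simp
    define E where "E i j = - D i j" for i j
    have symE: "symm n E" using symD unfolding symm_def E_def by auto
    obtain v l where "nsq n v = 1" "\<forall>i<n. mv n E v i = l * v i" "\<forall>w. quad n E w \<le> l * nsq n w"
      using eigen_max[OF n symE] by auto
    moreover have "quad n E x0 = - quad n D x0" unfolding quad_def E_def by (simp add: sum_negf)
    moreover have "mv n E v i = - mv n D v i" for i unfolding mv_def E_def by (simp add: sum_negf)
    ultimately have "nsq n v = 1" "\<forall>i<n. mv n D v i = (-l) * v i" "0 < l * nsq n x0"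
      using neg by (auto, smt (verit))
    moreover have "l \<noteq> 0" using \<open>0 < l * nsq n x0\<close> by auto
    ultimately show ?thesis by (metis neg_equal_0_iff_equal)
  qed
  then obtain v l where l: "l \<noteq> 0" and nv: "nsq n v = 1" and ev: "\<forall>i<n. mv n D v i = l * v i" by auto
  define a where "a = mv n S v"
  define b where "b = mv n T v"
  have "quad n (mat_mult n S S) v = quad n (mat_mult n T T) v" by (rule quad_cong) (use eq in auto)
  then have "(\<Sum>i<n. (a i)\<^sup>2) = (\<Sum>i<n. (b i)\<^sup>2)" unfolding a_def b_def sum_sq_mv[OF symS] sum_sq_mv[OF symT] .
  then have "0 = (\<Sum>i<n. (a i - b i) * (a i + b i))"
    by (simp add: power2_eq_square algebra_simps sum_subtractf)
  also have "\<dots> = (\<Sum>i<n. l * v i * (a i + b i))"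
    using ev by (intro sum.cong) (auto simp: a_def b_def mvD)
  also have "\<dots> = l * (quad n S v + quad n T v)"
    unfolding quad_mv a_def b_def by (simp add: sum_distrib_left algebra_simps sum.distrib)
  finally have "quad n S v + quad n T v = 0" using l by simp
  then have zS: "quad n S v = 0" and zT: "quad n T v = 0" using qS[of v] qT[of v] by auto
  have "\<forall>i<n. mv n S v i = 0" by (rule psd_zero[OF symS qS zS])
  moreover have "\<forall>i<n. mv n T v i = 0" by (rule psd_zero[OF symT qT zT])
  ultimately have "\<forall>i<n. l * v i = 0" using ev mvD by auto
  then have "\<forall>i<n. v i = 0" using l by auto
  then have "nsq n v = 0" unfolding nsq_def by simp
  then show False using nv by simp
qed

lemma mat_sqrt_props:
  assumes "mat_psd n A"
  shows "mat_psd n (mat_sqrt n A) \<and> (\<forall>i<n. \<forall>j<n. mat_mult n (mat_sqrt n A) (mat_sqrt n A) i j = A i j)"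
proof -
  let ?P = "\<lambda>S. mat_psd n S \<and> (\<forall>i<n. \<forall>j<n. mat_mult n S S i j = A i j)
      \<and> (\<forall>i j. \<not> (i < n \<and> j < n) \<longrightarrow> S i j = 0)"
  obtain S where PS: "mat_psd n S" and SS: "\<forall>i<n. \<forall>j<n. mat_mult n S S i j = A i j"
    using sqrt_exists[OF assms] by auto
  define S0 where "S0 i j = (if i < n \<and> j < n then S i j else 0)" for i j
  have P0: "?P S0"
  proof (intro conjI)
    show "mat_psd n S0" using PS unfolding mat_psd_def S0_def by simp
    show "\<forall>i<n. \<forall>j<n. mat_mult n S0 S0 i j = A i j"
    proof (intro allI impI)
      fix i j assume "i < n" "j < n"
      then have "mat_mult n S0 S0 i j = mat_mult n S S i j"
        unfolding mat_mult_def S0_def by (intro sum.cong) auto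
      then show "mat_mult n S0 S0 i j = A i j" using SS \<open>i < n\<close> \<open>j < n\<close> by simp
    qed
    show "\<forall>i j. \<not> (i < n \<and> j < n) \<longrightarrow> S0 i j = 0" unfolding S0_def by auto
  qed
  have uniq: "S1 = S2" if "?P S1" "?P S2" for S1 S2
  proof (intro ext)
    fix i j
    have p1: "mat_psd n S1" and p2: "mat_psd n S2" using that by blast+
    have "\<forall>i<n. \<forall>j<n. mat_mult n S1 S1 i j = mat_mult n S2 S2 i j" using that by simp
    then have "\<forall>i<n. \<forall>j<n. S1 i j = S2 i j"
      using sqrt_unique[OF p1 p2] by blast
    then show "S1 i j = S2 i j" using that by (cases "i < n \<and> j < n") auto
  qed
  have ex1: "\<exists>!S. ?P S"
  proof (rule ex1I[where a=S0])
    show "?P S0" by (rule P0)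
    fix x assume "?P x"
    then show "x = S0" by (rule uniq[OF _ P0])
  qed
  have "?P (mat_sqrt n A)"
    unfolding mat_sqrt_def by (rule theI'[OF ex1])
  then show ?thesis by blast
qed


lemma C_diag:
  fixes n :: nat and B C :: "nat \<Rightarrow> nat \<Rightarrow> real"
  assumes C_block: "\<forall>i<n. \<forall>j<n. C i j =
        (if i < n div 2 \<and> n div 2 \<le> j then B i (j - n div 2)
         else if n div 2 \<le> i \<and> j < n div 2 then B j (i - n div 2)
         else 0)"
  shows "i < n \<Longrightarrow> C i i = 0"
    and "i < n \<Longrightarrow> j < n \<Longrightarrow> C i j * ((if i < n div 2 then 1 else -1) * (if j < n div 2 then 1 else -1)) = - C i j"
  using C_block by auto

theorem lemma5:
  fixes n :: nat
    and B C \<rho>star \<rho> :: "nat \<Rightarrow> nat \<Rightarrow> real"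
  assumes n_even: "even n"
    and C_block: "\<forall>i<n. \<forall>j<n. C i j =
        (if i < n div 2 \<and> n div 2 \<le> j then B i (j - n div 2)
         else if n div 2 \<le> i \<and> j < n div 2 then B j (i - n div 2)
         else 0)"
    and opt: "sdp_optimal n C \<rho>star"
    and rho_psd: "mat_psd n \<rho>"
    and rho_diag: "\<forall>i<n. \<rho> i i > 0"
  shows "(\<integral>g. (\<Sum>i<n. \<Sum>j<n. rounding n \<rho> g i * C i j * rounding n \<rho> g j) \<partial>gauss_vec n)
     \<ge> 2 / pi * real n * mat_trace_prod n C
          (\<lambda>i j. \<rho> i j / (real n * sqrt (\<rho> i i * \<rho> j j)))
       - (1 - 2 / pi) * real n * mat_trace_prod n C \<rho>star"
proof (cases "n = 0")
  case True
  then show ?thesis by (simp add: mat_trace_prod_def)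
next
  case False
  then have npos: "0 < n" by simp
  define S where "S = mat_sqrt n \<rho>"
  have PS: "mat_psd n S" and SS: "\<forall>i<n. \<forall>j<n. mat_mult n S S i j = \<rho> i j"
    using mat_sqrt_props[OF rho_psd] unfolding S_def by auto
  have symS: "\<forall>i<n. \<forall>j<n. S i j = S j i" using PS unfolding mat_psd_def by auto
  have symR: "\<forall>i<n. \<forall>j<n. \<rho> i j = \<rho> j i" using rho_psd unfolding mat_psd_def by auto
  have G: "(\<Sum>k<n. S i k * S j k) = \<rho> i j" if "i < n" "j < n" for i j
  proof -
    have "(\<Sum>k<n. S i k * S j k) = mat_mult n S S i j"
      unfolding mat_mult_def using symS that by (intro sum.cong) auto
    then show ?thesis using SS that by simp
  qed
  have N: "(\<Sum>k<n. (S i k)\<^sup>2) = \<rho> i i" if "i < n" for i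
    using G[OF that that] by (simp add: power2_eq_square)
  define A where "A \<equiv> \<lambda>i g. \<Sum>k<n. S i k * g k"
  define Z where "Z \<equiv> \<lambda>i g. sgn (A i g) - sqrt (2 / pi) * (A i g / sqrt (\<rho> i i))"
  define K where "K \<equiv> \<lambda>i j. \<integral>g. Z i g * Z j g \<partial>gauss_vec n"
  have pos: "\<forall>i<n. 0 < (\<Sum>k<n. (S i k)\<^sup>2)" using N rho_diag by simp
  have Zeq: "\<And>i. i < n \<Longrightarrow> Z i = (\<lambda>g. sgn (A i g) - sqrt (2 / pi) * (A i g / sqrt (\<Sum>k<n. (S i k)\<^sup>2)))"
    unfolding Z_def using N by simp
  note pm = prob_main[of n S, OF pos]
  have Kdef: "K i j = (\<integral>g. (sgn (A i g) - sqrt (2 / pi) * (A i g / sqrt (\<Sum>k<n. (S i k)\<^sup>2)))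
                  * (sgn (A j g) - sqrt (2 / pi) * (A j g / sqrt (\<Sum>k<n. (S j k)\<^sup>2))) \<partial>gauss_vec n)"
    if "i < n" "j < n" for i j
    unfolding K_def using Zeq[OF that(1)] Zeq[OF that(2)] by simp
  have E: "(\<integral>g. sgn (A i g) * sgn (A j g) \<partial>gauss_vec n)
            = K i j + 2 / pi * \<rho> i j / (sqrt (\<rho> i i) * sqrt (\<rho> j j))" if "i < n" "j < n" for i j
    using pm(1) that unfolding Kdef[OF that] A_def by (simp add: G N)
  have Kpsd: "0 \<le> (\<Sum>i<n. \<Sum>j<n. v i * K i j * v j)" for v
  proof -
    have "(\<Sum>i<n. \<Sum>j<n. v i * K i j * v j) = (\<Sum>i<n. \<Sum>j<n. v i *
         (\<integral>g. (sgn (A i g) - sqrt (2 / pi) * (A i g / sqrt (\<Sum>k<n. (S i k)\<^sup>2)))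
                  * (sgn (A j g) - sqrt (2 / pi) * (A j g / sqrt (\<Sum>k<n. (S j k)\<^sup>2))) \<partial>gauss_vec n) * v j)"
      by (intro sum.cong refl) (simp add: Kdef)
    also have "\<dots> \<ge> 0" using pm(2) unfolding A_def by blast
    finally show ?thesis .
  qed
  have Kdiag: "K i i \<le> 1 - 2 / pi" if "i < n" for i
    using pm(3) that unfolding Kdef[OF that that] A_def by blast
  have Ksym: "K i j = K j i" for i j unfolding K_def by (simp add: mult.commute)
  have round: "rounding n \<rho> g i = sgn (A i g)" for g i
    unfolding rounding_def A_def S_def ..
  have LHS: "(\<integral>g. (\<Sum>i<n. \<Sum>j<n. rounding n \<rho> g i * C i j * rounding n \<rho> g j) \<partial>gauss_vec n)
      = (\<Sum>i<n. \<Sum>j<n. C i j * K i j) + 2 / pi * (\<Sum>i<n. \<Sum>j<n. C i j * (\<rho> i j / (sqrt (\<rho> i i) * sqrt (\<rho> j j))))"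
  proof -
    have ii: "integrable (gauss_vec n) (\<lambda>g. sgn (A i g) * sgn (A j g))" for i j
      unfolding A_def by (rule sgn_sgn_integrable)
    have "(\<integral>g. (\<Sum>i<n. \<Sum>j<n. rounding n \<rho> g i * C i j * rounding n \<rho> g j) \<partial>gauss_vec n)
       = (\<integral>g. (\<Sum>i<n. \<Sum>j<n. C i j * (sgn (A i g) * sgn (A j g))) \<partial>gauss_vec n)"
      unfolding round by (simp add: mult_ac)
    also have "\<dots> = (\<Sum>i<n. \<Sum>j<n. C i j * (\<integral>g. sgn (A i g) * sgn (A j g) \<partial>gauss_vec n))"
      using ii by (simp add: Bochner_Integration.integral_sum Bochner_Integration.integrable_sum)
    also have "\<dots> = (\<Sum>i<n. \<Sum>j<n. C i j * K i j + 2 / pi * (C i j * (\<rho> i j / (sqrt (\<rho> i i) * sqrt (\<rho> j j)))))"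
      by (intro sum.cong refl) (simp add: E algebra_simps)
    also have "\<dots> = (\<Sum>i<n. \<Sum>j<n. C i j * K i j) + 2 / pi * (\<Sum>i<n. \<Sum>j<n. C i j * (\<rho> i j / (sqrt (\<rho> i i) * sqrt (\<rho> j j))))"
      by (simp add: sum.distrib sum_distrib_left)
    finally show ?thesis .
  qed
  have T1: "real n * mat_trace_prod n C (\<lambda>i j. \<rho> i j / (real n * sqrt (\<rho> i i * \<rho> j j)))
      = (\<Sum>i<n. \<Sum>j<n. C i j * (\<rho> i j / (sqrt (\<rho> i i) * sqrt (\<rho> j j))))"
  proof -
    have "real n * mat_trace_prod n C (\<lambda>i j. \<rho> i j / (real n * sqrt (\<rho> i i * \<rho> j j)))
        = (\<Sum>i<n. \<Sum>j<n. real n * (C i j * (\<rho> j i / (real n * sqrt (\<rho> j j * \<rho> i i)))))"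
      unfolding mat_trace_prod_def by (simp add: sum_distrib_left)
    also have "\<dots> = (\<Sum>i<n. \<Sum>j<n. C i j * (\<rho> i j / (sqrt (\<rho> i i) * sqrt (\<rho> j j))))"
      using npos symR by (intro sum.cong refl) (auto simp: real_sqrt_mult mult_ac)
    finally show ?thesis .
  qed
  define \<kappa> where "\<kappa> = 1 - 2 / pi"
  have kpos: "0 < \<kappa>" unfolding \<kappa>_def using pi_gt3 by (simp add: field_simps)
  define d where "d i = (if i < n div 2 then 1 else -1 :: real)" for i
  have dd: "d i * d i = 1" for i unfolding d_def by simp
  define R where "R i j = (d i * d j * K i j + (if i = j then \<kappa> - K i i else 0)) / (\<kappa> * real n)" for i j
  have feas: "sdp_feasible n R"
    unfolding sdp_feasible_def mat_psd_def
  proof (intro conjI allI impI)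
    fix i j assume "i < n" "j < n"
    then show "R i j = R j i" unfolding R_def using Ksym by (simp add: mult_ac)
  next
    fix v :: "nat \<Rightarrow> real"
    have "(\<Sum>i<n. \<Sum>j<n. v i * R i j * v j) = ((\<Sum>i<n. \<Sum>j<n. (d i * v i) * K i j * (d j * v j))
         + (\<Sum>i<n. \<Sum>j<n. (if i = j then (\<kappa> - K i i) * (v i * v j) else 0))) / (\<kappa> * real n)"
    proof -
      have "(\<Sum>i<n. \<Sum>j<n. v i * R i j * v j) = (\<Sum>i<n. \<Sum>j<n. ((d i * v i) * K i j * (d j * v j)
         + (if i = j then (\<kappa> - K i i) * (v i * v j) else 0)) / (\<kappa> * real n))"
        by (intro sum.cong refl) (auto simp: R_def add_divide_distrib algebra_simps)
      also have "\<dots> = ((\<Sum>i<n. \<Sum>j<n. (d i * v i) * K i j * (d j * v j))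
         + (\<Sum>i<n. \<Sum>j<n. (if i = j then (\<kappa> - K i i) * (v i * v j) else 0))) / (\<kappa> * real n)"
        by (simp add: sum_divide_distrib[symmetric] sum.distrib add_divide_distrib)
      finally show ?thesis .
    qed
    also have "(\<Sum>i<n. \<Sum>j<n. (if i = j then (\<kappa> - K i i) * (v i * v j) else 0)) = (\<Sum>i<n. (\<kappa> - K i i) * (v i * v i))"
      by (intro sum.cong refl) simp
    finally have e: "(\<Sum>i<n. \<Sum>j<n. v i * R i j * v j) = ((\<Sum>i<n. \<Sum>j<n. (d i * v i) * K i j * (d j * v j))
         + (\<Sum>i<n. (\<kappa> - K i i) * (v i * v i))) / (\<kappa> * real n)" .
    have "0 \<le> (\<Sum>i<n. (\<kappa> - K i i) * (v i * v i))"
    proof (rule sum_nonneg)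
      fix i assume "i \<in> {..<n}"
      then have "0 \<le> \<kappa> - K i i" using Kdiag unfolding \<kappa>_def by auto
      then show "0 \<le> (\<kappa> - K i i) * (v i * v i)" by (rule mult_nonneg_nonneg) simp
    qed
    moreover have "0 \<le> (\<Sum>i<n. \<Sum>j<n. (d i * v i) * K i j * (d j * v j))" by (rule Kpsd)
    ultimately show "0 \<le> (\<Sum>i<n. \<Sum>j<n. v i * R i j * v j)" unfolding e using kpos npos by simp
  next
    fix i assume "i < n"
    show "R i i = 1 / real n" unfolding R_def using dd[of i] kpos npos
      by (simp add: field_simps)
  qed
  then have le: "mat_trace_prod n C R \<le> mat_trace_prod n C \<rho>star" using opt unfolding sdp_optimal_def by blast
  have "mat_trace_prod n C R = - (\<Sum>i<n. \<Sum>j<n. C i j * K i j) / (\<kappa> * real n)"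
  proof -
    have "mat_trace_prod n C R = (\<Sum>i<n. \<Sum>j<n. C i j * (d i * d j) * K i j / (\<kappa> * real n))"
      unfolding mat_trace_prod_def R_def using C_diag(1)[OF C_block] Ksym
      by (intro sum.cong refl) (auto simp: mult_ac)
    also have "\<dots> = (\<Sum>i<n. \<Sum>j<n. - (C i j * K i j) / (\<kappa> * real n))"
      using C_diag(2)[OF C_block] unfolding d_def by (intro sum.cong refl) auto
    also have "\<dots> = - (\<Sum>i<n. \<Sum>j<n. C i j * K i j) / (\<kappa> * real n)"
      by (simp add: sum_divide_distrib sum_negf)
    finally show ?thesis .
  qed
  with le have "- (\<Sum>i<n. \<Sum>j<n. C i j * K i j) / (\<kappa> * real n) \<le> mat_trace_prod n C \<rho>star" by simp
  then have CK: "- (\<kappa> * real n) * mat_trace_prod n C \<rho>star \<le> (\<Sum>i<n. \<Sum>j<n. C i j * K i j)"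
  proof -
    have q: "0 < \<kappa> * real n" using kpos npos by simp
    have "(- (\<Sum>i<n. \<Sum>j<n. C i j * K i j)) / (\<kappa> * real n) \<le> mat_trace_prod n C \<rho>star"
      using \<open>- (\<Sum>i<n. \<Sum>j<n. C i j * K i j) / (\<kappa> * real n) \<le> mat_trace_prod n C \<rho>star\<close> by simp
    then have "- (\<Sum>i<n. \<Sum>j<n. C i j * K i j) \<le> mat_trace_prod n C \<rho>star * (\<kappa> * real n)"
      by (rule pos_divide_le_eq[OF q, THEN iffD1])
    then show ?thesis by (simp add: algebra_simps)
  qed
  show ?thesis unfolding LHS mult.assoc[of "2 / pi"] T1 using CK unfolding \<kappa>_def by (simp add: mult_ac)
qed


end
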